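(* Let $R$ be an $\mathbb N$-graded ring with $R_0$ a field, and let $\mathfrak m$ be its homogeneous maximal ideal. Let $M,N$ be finitely generated graded $R$-modules with $N$ torsion-free. If $\phi\colon M_{\mathfrak m}\to N_{\mathfrak m}$ is a morphism of $R_{\mathfrak m}$-modules, then there is a morphism of $R$-modules $\tilde\phi\colon M\to N$ such that $\tilde\phi\otimes_R R_{\mathfrak m}=u\phi$ for some unit $u$ of $R_{\mathfrak m}$. *)

theory Defs
  imports Complex_Main
begin

definition direct_sum_decomp :: "('i \<Rightarrow> 'a::ab_group_add set) \<Rightarrow> bool" where
  "direct_sum_decomp G \<longleftrightarrow>
     (\<forall>i. 0 \<in> G i \<and> (\<forall>x\<in>G i. \<forall>y\<in>G i. x + y \<in> G i \<and> - x \<in> G i)) \<and>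
     (\<forall>r. \<exists>!c. finite {i. c i \<noteq> 0} \<and> (\<forall>i. c i \<in> G i) \<and> r = sum c {i. c i \<noteq> 0})"

definition hcomp :: "('i \<Rightarrow> 'a::ab_group_add set) \<Rightarrow> 'a \<Rightarrow> 'i \<Rightarrow> 'a" where
  "hcomp G r = (THE c. finite {i. c i \<noteq> 0} \<and> (\<forall>i. c i \<in> G i) \<and> r = sum c {i. c i \<noteq> 0})"

definition graded_ring :: "(nat \<Rightarrow> 'r::comm_ring_1 set) \<Rightarrow> bool" where
  "graded_ring G \<longleftrightarrow> direct_sum_decomp G \<and> 1 \<in> G 0 \<and>
     (\<forall>i j. \<forall>x\<in>G i. \<forall>y\<in>G j. x * y \<in> G (i + j))"

definition degree0_field :: "(nat \<Rightarrow> 'r::comm_ring_1 set) \<Rightarrow> bool" where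
  "degree0_field G \<longleftrightarrow> (1::'r) \<noteq> 0 \<and> (\<forall>x\<in>G 0. x \<noteq> 0 \<longrightarrow> (\<exists>y\<in>G 0. x * y = 1))"

definition hom_max_ideal :: "(nat \<Rightarrow> 'r::comm_ring_1 set) \<Rightarrow> 'r set" where
  "hom_max_ideal G = {r. hcomp G r 0 = 0}"

text \<open>A (Z-)graded R-module (the module being the whole type, scalar action sc).\<close>
definition graded_module ::
  "(nat \<Rightarrow> 'r::comm_ring_1 set) \<Rightarrow> ('r \<Rightarrow> 'm::ab_group_add \<Rightarrow> 'm) \<Rightarrow> (int \<Rightarrow> 'm set) \<Rightarrow> bool" where
  "graded_module G sc GM \<longleftrightarrow> module sc \<and> direct_sum_decomp GM \<and>
     (\<forall>i j. \<forall>r\<in>G i. \<forall>x\<in>GM j. sc r x \<in> GM (int i + j))"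

definition fin_gen_module :: "('r::comm_ring_1 \<Rightarrow> 'm::ab_group_add \<Rightarrow> 'm) \<Rightarrow> bool" where
  "fin_gen_module sc \<longleftrightarrow> (\<exists>F. finite F \<and> module.span sc F = UNIV)"

definition torsion_free :: "('r::comm_ring_1 \<Rightarrow> 'm::ab_group_add \<Rightarrow> 'm) \<Rightarrow> bool" where
  "torsion_free sc \<longleftrightarrow> (\<forall>r x. (\<forall>a::'r. r * a = 0 \<longrightarrow> a = 0) \<longrightarrow> sc r x = 0 \<longrightarrow> x = 0)"

definition loc_rel :: "'r::comm_ring_1 set \<Rightarrow> ('r \<Rightarrow> 'm::ab_group_add \<Rightarrow> 'm) \<Rightarrow> (('m \<times> 'r) \<times> ('m \<times> 'r)) set" where
  "loc_rel S sc = {((x, s), (y, t)). s \<in> S \<and> t \<in> S \<and> (\<exists>u\<in>S. sc u (sc t x - sc s y) = 0)}"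

text \<open>The underlying set of S^{-1} M: equivalence classes of fractions x/s.\<close>
definition Loc :: "'r::comm_ring_1 set \<Rightarrow> ('r \<Rightarrow> 'm::ab_group_add \<Rightarrow> 'm) \<Rightarrow> ('m \<times> 'r) set set" where
  "Loc S sc = (UNIV \<times> S) // loc_rel S sc"

definition frac :: "'r::comm_ring_1 set \<Rightarrow> ('r \<Rightarrow> 'm::ab_group_add \<Rightarrow> 'm) \<Rightarrow> 'm \<Rightarrow> 'r \<Rightarrow> ('m \<times> 'r) set" where
  "frac S sc x s = loc_rel S sc `` {(x, s)}"

definition loc_add :: "'r::comm_ring_1 set \<Rightarrow> ('r \<Rightarrow> 'm::ab_group_add \<Rightarrow> 'm) \<Rightarrow>
    ('m \<times> 'r) set \<Rightarrow> ('m \<times> 'r) set \<Rightarrow> ('m \<times> 'r) set" where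
  "loc_add S sc X Y = \<Union>{frac S sc (sc t x + sc s y) (s * t) | x s y t. (x, s) \<in> X \<and> (y, t) \<in> Y}"

definition loc_smult :: "'r::comm_ring_1 set \<Rightarrow> ('r \<Rightarrow> 'm::ab_group_add \<Rightarrow> 'm) \<Rightarrow>
    ('r \<times> 'r) set \<Rightarrow> ('m \<times> 'r) set \<Rightarrow> ('m \<times> 'r) set" where
  "loc_smult S sc A X = \<Union>{frac S sc (sc r x) (s * t) | r s x t. (r, s) \<in> A \<and> (x, t) \<in> X}"

definition loc_module_hom :: "'r::comm_ring_1 set \<Rightarrow> ('r \<Rightarrow> 'm::ab_group_add \<Rightarrow> 'm) \<Rightarrow>
    ('r \<Rightarrow> 'n::ab_group_add \<Rightarrow> 'n) \<Rightarrow> (('m \<times> 'r) set \<Rightarrow> ('n \<times> 'r) set) \<Rightarrow> bool" where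
  "loc_module_hom S scM scN \<phi> \<longleftrightarrow>
     (\<forall>X\<in>Loc S scM. \<phi> X \<in> Loc S scN) \<and>
     (\<forall>X\<in>Loc S scM. \<forall>Y\<in>Loc S scM. \<phi> (loc_add S scM X Y) = loc_add S scN (\<phi> X) (\<phi> Y)) \<and>
     (\<forall>A\<in>Loc S (*). \<forall>X\<in>Loc S scM. \<phi> (loc_smult S scM A X) = loc_smult S scN A (\<phi> X))"

definition loc_unit :: "'r::comm_ring_1 set \<Rightarrow> ('r \<times> 'r) set \<Rightarrow> bool" where
  "loc_unit S u \<longleftrightarrow> u \<in> Loc S (*) \<and> (\<exists>v\<in>Loc S (*). loc_smult S (*) u v = frac S (*) 1 1)"

text \<open>The localized map f \<otimes> S^{-1}R : x/s \<mapsto> f(x)/s.\<close>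
definition loc_map :: "'r::comm_ring_1 set \<Rightarrow> ('r \<Rightarrow> 'n::ab_group_add \<Rightarrow> 'n) \<Rightarrow> ('m \<Rightarrow> 'n) \<Rightarrow>
    ('m \<times> 'r) set \<Rightarrow> ('n \<times> 'r) set" where
  "loc_map S scN f X = \<Union>{frac S scN (f x) s | x s. (x, s) \<in> X}"

end

theory Submission imports Defs begin

lemma hc_props:
  assumes "direct_sum_decomp G"
  shows "finite {i. hcomp G r i \<noteq> 0} \<and> (\<forall>i. hcomp G r i \<in> G i) \<and> r = sum (hcomp G r) {i. hcomp G r i \<noteq> 0}"
proof -
  have ex: "\<exists>!c. finite {i. c i \<noteq> 0} \<and> (\<forall>i. c i \<in> G i) \<and> r = sum c {i. c i \<noteq> 0}"
    using assms unfolding direct_sum_decomp_def by blast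
  show ?thesis unfolding hcomp_def by (rule theI'[OF ex])
qed

lemma hc_unique:
  assumes "direct_sum_decomp G" "finite {i. c i \<noteq> 0}" "\<forall>i. c i \<in> G i" "r = sum c {i. c i \<noteq> 0}"
  shows "hcomp G r = c"
proof -
  have ex: "\<exists>!c. finite {i. c i \<noteq> 0} \<and> (\<forall>i. c i \<in> G i) \<and> r = sum c {i. c i \<noteq> 0}"
    using assms(1) unfolding direct_sum_decomp_def by blast
  show ?thesis unfolding hcomp_def
    by (rule the1_equality[OF ex]) (use assms in auto)
qed

lemma hc_expand:
  assumes d: "direct_sum_decomp G" and F: "finite F" "{i. hcomp G r i \<noteq> 0} \<subseteq> F"
  shows "r = (\<Sum>i\<in>F. hcomp G r i)"
proof -
  have "r = sum (hcomp G r) {i. hcomp G r i \<noteq> 0}" using hc_props[OF d] by blast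
  also have "\<dots> = (\<Sum>i\<in>F. hcomp G r i)"
    by (rule sum.mono_neutral_left) (use F in auto)
  finally show ?thesis .
qed

lemma hc_add:
  assumes d: "direct_sum_decomp G"
  shows "hcomp G (x + y) = (\<lambda>i. hcomp G x i + hcomp G y i)"
proof (rule hc_unique[OF d])
  let ?c = "\<lambda>i. hcomp G x i + hcomp G y i"
  have fx: "finite {i. hcomp G x i \<noteq> 0}" and fy: "finite {i. hcomp G y i \<noteq> 0}"
    using hc_props[OF d] by blast+
  have sub: "{i. ?c i \<noteq> 0} \<subseteq> {i. hcomp G x i \<noteq> 0} \<union> {i. hcomp G y i \<noteq> 0}" by auto
  show "finite {i. ?c i \<noteq> 0}" using fx fy sub finite_subset by blast
  show "\<forall>i. ?c i \<in> G i" using hc_props[OF d] d unfolding direct_sum_decomp_def by blast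
  let ?U = "{i. hcomp G x i \<noteq> 0} \<union> {i. hcomp G y i \<noteq> 0}"
  have fU: "finite ?U" using fx fy by blast
  have "x = sum (hcomp G x) ?U" by (rule hc_expand[OF d fU]) blast
  moreover have "y = sum (hcomp G y) ?U" by (rule hc_expand[OF d fU]) blast
  moreover have "sum ?c ?U = sum ?c {i. ?c i \<noteq> 0}"
    by (rule sum.mono_neutral_right) (use fx fy sub in auto)
  ultimately show "x + y = sum ?c {i. ?c i \<noteq> 0}" by (simp add: sum.distrib)
qed

lemma hc_zero:
  assumes d: "direct_sum_decomp G"
  shows "hcomp G 0 = (\<lambda>i. 0)"
  by (rule hc_unique[OF d]) (use d in \<open>auto simp: direct_sum_decomp_def\<close>)

lemma hc_homog:
  assumes d: "direct_sum_decomp G" and x: "x \<in> G k"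
  shows "hcomp G x = (\<lambda>i. if i = k then x else 0)"
proof (rule hc_unique[OF d])
  have "{i. (if i = k then x else 0) \<noteq> 0} \<subseteq> {k}" by auto
  then show "finite {i. (if i = k then x else 0) \<noteq> 0}" using finite_subset by blast
  show "\<forall>i. (if i = k then x else 0) \<in> G i" using d x unfolding direct_sum_decomp_def by auto
  have e: "{i. (if i = k then x else 0) \<noteq> 0} = (if x = 0 then {} else {k})" by auto
  show "x = (\<Sum>i\<in>{i. (if i = k then x else 0) \<noteq> 0}. if i = k then x else 0)"
    unfolding e by simp
qed

lemma hc_sum:
  assumes d: "direct_sum_decomp G"
  shows "finite A \<Longrightarrow> hcomp G (\<Sum>a\<in>A. f a) k = (\<Sum>a\<in>A. hcomp G (f a) k)"
  by (induction A rule: finite_induct) (simp_all add: hc_zero[OF d] hc_add[OF d])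

lemma hc_mult_low:
  fixes G :: "nat \<Rightarrow> 'r::comm_ring_1 set"
  assumes g: "graded_ring G" and low: "\<And>j. j < d \<Longrightarrow> hcomp G a j = 0"
  shows "hcomp G (s * a) d = hcomp G s 0 * hcomp G a d"
proof -
  have dd: "direct_sum_decomp G" and mul: "\<forall>i j. \<forall>x\<in>G i. \<forall>y\<in>G j. x * y \<in> G (i + j)"
    using g unfolding graded_ring_def by auto
  define F where "F = {i. hcomp G s i \<noteq> 0} \<union> {i. hcomp G a i \<noteq> 0} \<union> {0, d}"
  have fF: "finite F" unfolding F_def using hc_props[OF dd] by auto
  have hs: "s = (\<Sum>i\<in>F. hcomp G s i)" by (rule hc_expand[OF dd fF]) (auto simp: F_def)
  have ha: "a = (\<Sum>i\<in>F. hcomp G a i)" by (rule hc_expand[OF dd fF]) (auto simp: F_def)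
  have "s * a = (\<Sum>i\<in>F. hcomp G s i) * (\<Sum>j\<in>F. hcomp G a j)"
    using hs ha by simp
  also have "\<dots> = (\<Sum>i\<in>F. \<Sum>j\<in>F. hcomp G s i * hcomp G a j)"
    by (simp add: sum_product)
  finally have sa: "s * a = (\<Sum>i\<in>F. \<Sum>j\<in>F. hcomp G s i * hcomp G a j)" .
  have hom: "hcomp G s i * hcomp G a j \<in> G (i + j)" for i j
    using mul hc_props[OF dd] by blast
  have "hcomp G (s * a) d = (\<Sum>i\<in>F. \<Sum>j\<in>F. hcomp G (hcomp G s i * hcomp G a j) d)"
    unfolding sa by (simp add: hc_sum[OF dd] fF)
  also have "\<dots> = (\<Sum>i\<in>F. \<Sum>j\<in>F. if i = 0 \<and> j = d then hcomp G s 0 * hcomp G a d else 0)"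
  proof (intro sum.cong refl)
    fix i j
    show "hcomp G (hcomp G s i * hcomp G a j) d = (if i = 0 \<and> j = d then hcomp G s 0 * hcomp G a d else 0)"
      using low[of j] by (auto simp: hc_homog[OF dd hom])
  qed
  also have "\<dots> = hcomp G s 0 * hcomp G a d"
  proof -
    have 0: "0 \<in> F" and dF: "d \<in> F" unfolding F_def by auto
    have "(\<Sum>j\<in>F. if i = 0 \<and> j = d then c else 0) = (if i = 0 then c else 0)" for i :: nat and c :: 'r
      using dF fF by (cases "i = 0") simp_all
    then show ?thesis using 0 fF by simp
  qed
  finally show ?thesis .
qed


locale locm = module scale for scale :: "'a::comm_ring_1 \<Rightarrow> 'b::ab_group_add \<Rightarrow> 'b" (infixr \<open>*s\<close> 75) +
  fixes S :: "'a set"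
  assumes oneS: "1 \<in> S" and multS: "a \<in> S \<Longrightarrow> b \<in> S \<Longrightarrow> a * b \<in> S"
begin

lemma rel_iff: "((x, s), (y, t)) \<in> loc_rel S scale \<longleftrightarrow> s \<in> S \<and> t \<in> S \<and> (\<exists>u\<in>S. u *s (t *s x - s *s y) = 0)"
  by (simp add: loc_rel_def)

lemma equiv_rel: "equiv (UNIV \<times> S) (loc_rel S scale)"
proof (rule equivI)
  show "loc_rel S scale \<subseteq> (UNIV \<times> S) \<times> (UNIV \<times> S)" by (auto simp: loc_rel_def)
  show "refl_on (UNIV \<times> S) (loc_rel S scale)"
    unfolding refl_on_def by (auto simp: loc_rel_def intro: oneS)
  show "sym (loc_rel S scale)"
  proof (rule symI)
    fix a b assume "(a, b) \<in> loc_rel S scale"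
    then obtain x s y t where ab: "a = (x, s)" "b = (y, t)" and st: "s \<in> S" "t \<in> S"
      and u: "\<exists>u\<in>S. u *s (t *s x - s *s y) = 0" by (cases a, cases b) (auto simp: rel_iff)
    then obtain u where "u \<in> S" "u *s (t *s x - s *s y) = 0" by blast
    moreover have "u *s (s *s y - t *s x) = - (u *s (t *s x - s *s y))" by (simp add: algebra_simps)
    ultimately show "(b, a) \<in> loc_rel S scale" using ab st by (auto simp: rel_iff)
  qed
  show "trans (loc_rel S scale)"
  proof (rule transI)
    fix a b c assume "(a, b) \<in> loc_rel S scale" "(b, c) \<in> loc_rel S scale"
    then obtain x s y t z w where abc: "a = (x, s)" "b = (y, t)" "c = (z, w)" and st: "s \<in> S" "t \<in> S" "w \<in> S"
      and "\<exists>u\<in>S. u *s (t *s x - s *s y) = 0" "\<exists>u\<in>S. u *s (w *s y - t *s z) = 0"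
      by (cases a, cases b, cases c) (auto simp: rel_iff)
    then obtain u v where uv: "u \<in> S" "v \<in> S" "u *s (t *s x - s *s y) = 0" "v *s (w *s y - t *s z) = 0" by blast
    have "(u * v * t) *s (w *s x - s *s z) = (v * w) *s (u *s (t *s x - s *s y)) + (u * s) *s (v *s (w *s y - t *s z))"
      by (simp add: algebra_simps)
    then have "(u * v * t) *s (w *s x - s *s z) = 0" using uv by simp
    moreover have "u * v * t \<in> S" using uv st multS by blast
    ultimately show "(a, c) \<in> loc_rel S scale" using abc st by (auto simp: rel_iff)
  qed
qed

lemma frac_eq_iff: "s \<in> S \<Longrightarrow> t \<in> S \<Longrightarrow> frac S scale x s = frac S scale y t \<longleftrightarrow> (\<exists>u\<in>S. u *s (t *s x - s *s y) = 0)"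
  unfolding frac_def using eq_equiv_class_iff[OF equiv_rel, of "(x, s)" "(y, t)"] by (simp add: rel_iff)

lemma frac_eqI: "s \<in> S \<Longrightarrow> t \<in> S \<Longrightarrow> u \<in> S \<Longrightarrow> u *s (t *s x - s *s y) = 0 \<Longrightarrow> frac S scale x s = frac S scale y t"
  using frac_eq_iff by blast

lemma frac_in_Loc: "s \<in> S \<Longrightarrow> frac S scale x s \<in> Loc S scale"
  unfolding Loc_def frac_def by (rule quotientI) simp

lemma Loc_E: assumes "X \<in> Loc S scale" obtains x s where "s \<in> S" "X = frac S scale x s"
  using assms unfolding Loc_def frac_def by (auto elim!: quotientE)

lemma mem_frac: "(y, t) \<in> frac S scale x s \<longleftrightarrow> ((x, s), (y, t)) \<in> loc_rel S scale"
  by (simp add: frac_def)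

lemma self_frac: "s \<in> S \<Longrightarrow> (x, s) \<in> frac S scale x s"
  unfolding mem_frac rel_iff using oneS by auto

lemma loc_add_frac:
  assumes s: "s \<in> S" and t: "t \<in> S"
  shows "loc_add S scale (frac S scale x s) (frac S scale y t) = frac S scale (t *s x + s *s y) (s * t)"
proof -
  have "{frac S scale (t' *s x' + s' *s y') (s' * t') | x' s' y' t'. (x', s') \<in> frac S scale x s \<and> (y', t') \<in> frac S scale y t}
      = {frac S scale (t *s x + s *s y) (s * t)}" (is "?L = ?R")
  proof
    show "?R \<subseteq> ?L" using self_frac[OF s, of x] self_frac[OF t, of y] by blast
    show "?L \<subseteq> ?R"
    proof
      fix X assume "X \<in> ?L"
      then obtain x' s' y' t' where X: "X = frac S scale (t' *s x' + s' *s y') (s' * t')"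
        and "(x', s') \<in> frac S scale x s" "(y', t') \<in> frac S scale y t" by blast
      then have s': "s' \<in> S" and t': "t' \<in> S" and "\<exists>u\<in>S. u *s (s' *s x - s *s x') = 0" "\<exists>u\<in>S. u *s (t' *s y - t *s y') = 0"
        by (auto simp: mem_frac rel_iff)
      then obtain u v where uv: "u \<in> S" "v \<in> S" "u *s (s' *s x - s *s x') = 0" "v *s (t' *s y - t *s y') = 0" by blast
      have "(u * v) *s ((s * t) *s (t' *s x' + s' *s y') - (s' * t') *s (t *s x + s *s y))
          = - ((v * t * t') *s (u *s (s' *s x - s *s x'))) - ((u * s * s') *s (v *s (t' *s y - t *s y')))"
        by (simp add: algebra_simps)
      then have "(u * v) *s ((s * t) *s (t' *s x' + s' *s y') - (s' * t') *s (t *s x + s *s y)) = 0"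
        using uv by simp
      then have "frac S scale (t' *s x' + s' *s y') (s' * t') = frac S scale (t *s x + s *s y) (s * t)"
        by (rule frac_eqI[rotated 3]) (use s t s' t' uv multS in auto)
      then show "X \<in> ?R" using X by simp
    qed
  qed
  then show ?thesis unfolding loc_add_def by simp
qed

end

lemma module_mult: "module ((*) :: 'a::comm_ring_1 \<Rightarrow> 'a \<Rightarrow> 'a)"
  by unfold_locales (simp_all add: algebra_simps)

lemma locm_mult: "locm scale S \<Longrightarrow> locm ((*)) S"
  unfolding locm_def locm_axioms_def using module_mult by blast

lemma loc_smult_frac:
  assumes L: "locm scale S" and s: "s \<in> S" and t: "t \<in> S"
  shows "loc_smult S scale (frac S (*) r s) (frac S scale x t) = frac S scale (scale r x) (s * t)"
proof -
  interpret L: locm scale S by fact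
  have R: "locm (*) S" using locm_mult[OF L] .
  have "{frac S scale (scale r' x') (s' * t') | r' s' x' t'. (r', s') \<in> frac S (*) r s \<and> (x', t') \<in> frac S scale x t}
      = {frac S scale (scale r x) (s * t)}" (is "?L = ?R")
  proof
    show "?R \<subseteq> ?L" using locm.self_frac[OF R s, of r] L.self_frac[OF t, of x] by blast
    show "?L \<subseteq> ?R"
    proof
      fix X assume "X \<in> ?L"
      then obtain r' s' x' t' where X: "X = frac S scale (scale r' x') (s' * t')"
        and "(r', s') \<in> frac S (*) r s" "(x', t') \<in> frac S scale x t" by blast
      then have s': "s' \<in> S" and t': "t' \<in> S" and "\<exists>u\<in>S. u * (s' * r - s * r') = 0" "\<exists>u\<in>S. scale u (scale t' x - scale t x') = 0"
        by (auto simp: L.mem_frac L.rel_iff locm.mem_frac[OF R] locm.rel_iff[OF R])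
      then obtain u v where uv: "u \<in> S" "v \<in> S" "u * (s' * r - s * r') = 0" "scale v (scale t' x - scale t x') = 0" by blast
      have "scale (u * v) (scale (s * t) (scale r' x') - scale (s' * t') (scale r x))
          = - scale (v * t') (scale (u * (s' * r - s * r')) x) - scale (u * s * r') (scale v (scale t' x - scale t x'))"
        by (simp add: algebra_simps)
      then have "scale (u * v) (scale (s * t) (scale r' x') - scale (s' * t') (scale r x)) = 0"
        using uv by simp
      then have "frac S scale (scale r' x') (s' * t') = frac S scale (scale r x) (s * t)"
        by (rule L.frac_eqI[rotated 3]) (use s t s' t' uv L.multS in auto)
      then show "X \<in> ?R" using X by simp
    qed
  qed
  then show ?thesis unfolding loc_smult_def by simp
qed

lemma loc_map_frac:
  assumes L: "locm scM S" and N: "locm scN S" and f: "module_hom scM scN f" and s: "s \<in> S"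
  shows "loc_map S scN f (frac S scM x s) = frac S scN (f x) s"
proof -
  interpret L: locm scM S by fact
  interpret N: locm scN S by fact
  interpret f: module_hom scM scN f by fact
  have "{frac S scN (f x') s' | x' s'. (x', s') \<in> frac S scM x s} = {frac S scN (f x) s}" (is "?L = ?R")
  proof
    show "?R \<subseteq> ?L" using L.self_frac[OF s, of x] by blast
    show "?L \<subseteq> ?R"
    proof
      fix X assume "X \<in> ?L"
      then obtain x' s' where X: "X = frac S scN (f x') s'" and "(x', s') \<in> frac S scM x s" by blast
      then have s': "s' \<in> S" and "\<exists>u\<in>S. scM u (scM s' x - scM s x') = 0"
        by (auto simp: L.mem_frac L.rel_iff)
      then obtain u where u: "u \<in> S" "scM u (scM s' x - scM s x') = 0" by blast
      have e1: "f (scM u (scM s' x - scM s x')) = scN u (scN s' (f x) - scN s (f x'))"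
        by (simp add: f.scale f.diff)
      have "scN u (scN s (f x') - scN s' (f x)) = - f (scM u (scM s' x - scM s x'))"
        unfolding e1 by (metis N.scale_minus_right minus_diff_eq)
      then have "scN u (scN s (f x') - scN s' (f x)) = 0" using u by simp
      then have "frac S scN (f x') s' = frac S scN (f x) s"
        by (rule N.frac_eqI[rotated 3]) (use s s' u in auto)
      then show "X \<in> ?R" using X by simp
    qed
  qed
  then show ?thesis unfolding loc_map_def by simp
qed

lemma loc_smult_in:
  assumes L: "locm sc S" and A: "A \<in> Loc S (*)" and X: "X \<in> Loc S sc"
  shows "loc_smult S sc A X \<in> Loc S sc"
proof -
  interpret L: locm sc S by fact
  have R: "locm (*) S" using locm_mult[OF L] .
  obtain r a where a: "a \<in> S" "A = frac S (*) r a" using A by (rule locm.Loc_E[OF R])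
  obtain x t where t: "t \<in> S" "X = frac S sc x t" using X by (rule L.Loc_E)
  show ?thesis using a t by (simp add: loc_smult_frac[OF L] L.frac_in_Loc L.multS)
qed

lemma loc_add_in:
  assumes L: "locm sc S" and X: "X \<in> Loc S sc" and Y: "Y \<in> Loc S sc"
  shows "loc_add S sc X Y \<in> Loc S sc"
proof -
  interpret L: locm sc S by fact
  obtain x t where t: "t \<in> S" "X = frac S sc x t" using X by (rule L.Loc_E)
  obtain y w where w: "w \<in> S" "Y = frac S sc y w" using Y by (rule L.Loc_E)
  show ?thesis using w t by (simp add: L.loc_add_frac L.frac_in_Loc L.multS)
qed

lemma loc_smult_add:
  assumes L: "locm sc S" and A: "A \<in> Loc S (*)" and X: "X \<in> Loc S sc" and Y: "Y \<in> Loc S sc"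
  shows "loc_smult S sc A (loc_add S sc X Y) = loc_add S sc (loc_smult S sc A X) (loc_smult S sc A Y)"
proof -
  interpret L: locm sc S by fact
  have R: "locm (*) S" using locm_mult[OF L] .
  obtain r a where a: "a \<in> S" "A = frac S (*) r a" using A by (rule locm.Loc_E[OF R])
  obtain x s where s: "s \<in> S" "X = frac S sc x s" using X by (rule L.Loc_E)
  obtain y t where t: "t \<in> S" "Y = frac S sc y t" using Y by (rule L.Loc_E)
  have as: "a * s \<in> S" "a * t \<in> S" "s * t \<in> S" "a * (s * t) \<in> S" "a * s * (a * t) \<in> S"
    using a s t L.multS by auto
  have "frac S sc (sc r (sc t x + sc s y)) (a * (s * t))
      = frac S sc (sc (a * t) (sc r x) + sc (a * s) (sc r y)) (a * s * (a * t))"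
    by (rule L.frac_eqI[OF as(4) as(5) L.oneS]) (simp add: algebra_simps)
  then show ?thesis using a s t as
    by (simp add: loc_smult_frac[OF L] L.loc_add_frac)
qed

lemma loc_smult_comm:
  assumes L: "locm sc S" and A: "A \<in> Loc S (*)" and B: "B \<in> Loc S (*)" and X: "X \<in> Loc S sc"
  shows "loc_smult S sc A (loc_smult S sc B X) = loc_smult S sc B (loc_smult S sc A X)"
proof -
  interpret L: locm sc S by fact
  have R: "locm (*) S" using locm_mult[OF L] .
  obtain r a where a: "a \<in> S" "A = frac S (*) r a" using A by (rule locm.Loc_E[OF R])
  obtain r' b where b: "b \<in> S" "B = frac S (*) r' b" using B by (rule locm.Loc_E[OF R])
  obtain x s where s: "s \<in> S" "X = frac S sc x s" using X by (rule L.Loc_E)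
  have "b * s \<in> S" "a * s \<in> S" using a b s L.multS by auto
  then show ?thesis using a b s
    by (simp add: loc_smult_frac[OF L] mult_ac)
qed


lemma S_mem: "x \<in> - hom_max_ideal G \<longleftrightarrow> hcomp G x 0 \<noteq> 0"
  by (simp add: hom_max_ideal_def)

lemma deg0_inv:
  assumes "degree0_field G" "x \<in> G 0" "x \<noteq> 0" obtains y where "y \<in> G 0" "x * y = 1"
  using assms unfolding degree0_field_def by blast

lemma S_one:
  assumes g: "graded_ring G" and f: "degree0_field G"
  shows "1 \<in> - hom_max_ideal G"
proof -
  have dd: "direct_sum_decomp G" and "1 \<in> G 0" using g unfolding graded_ring_def by auto
  then have "hcomp G 1 0 = 1" by (simp add: hc_homog)
  then show ?thesis using f unfolding S_mem degree0_field_def by simp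
qed

lemma S_mult:
  assumes g: "graded_ring G" and f: "degree0_field G"
    and a: "a \<in> - hom_max_ideal G" and b: "b \<in> - hom_max_ideal G"
  shows "a * b \<in> - hom_max_ideal G"
proof -
  have dd: "direct_sum_decomp G" using g unfolding graded_ring_def by auto
  have e: "hcomp G (a * b) 0 = hcomp G a 0 * hcomp G b 0"
    using hc_mult_low[OF g, of 0 b a] by simp
  have a0: "hcomp G a 0 \<in> G 0" "hcomp G a 0 \<noteq> 0" using hc_props[OF dd, of a] a by (auto simp: hom_max_ideal_def)
  have b0: "hcomp G b 0 \<in> G 0" "hcomp G b 0 \<noteq> 0" using hc_props[OF dd, of b] b by (auto simp: hom_max_ideal_def)
  obtain y where y: "hcomp G a 0 * y = 1" using deg0_inv[OF f a0] by blast
  obtain z where z: "hcomp G b 0 * z = 1" using deg0_inv[OF f b0] by blast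
  have one: "(1::'a) \<noteq> 0" using f unfolding degree0_field_def by blast
  have "hcomp G a 0 * hcomp G b 0 \<noteq> 0"
  proof
    assume h: "hcomp G a 0 * hcomp G b 0 = 0"
    have "(1::'a) = (hcomp G a 0 * y) * (hcomp G b 0 * z)" using y z by simp
    also have "\<dots> = (hcomp G a 0 * hcomp G b 0) * (y * z)" by (simp add: mult_ac)
    finally show False using h one by simp
  qed
  then show ?thesis unfolding S_mem e .
qed

lemma S_nzd:
  assumes g: "graded_ring G" and f: "degree0_field G"
    and s: "s \<in> - hom_max_ideal G" and sa: "s * a = 0"
  shows "a = 0"
proof (rule ccontr)
  assume an: "a \<noteq> 0"
  have dd: "direct_sum_decomp G" using g unfolding graded_ring_def by auto
  have "\<exists>j. hcomp G a j \<noteq> 0"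
  proof (rule ccontr)
    assume "\<not> (\<exists>j. hcomp G a j \<noteq> 0)"
    then have "{i. hcomp G a i \<noteq> 0} = {}" by auto
    then show False using hc_props[OF dd, of a] an by simp
  qed
  define d where "d = (LEAST j. hcomp G a j \<noteq> 0)"
  have ad: "hcomp G a d \<noteq> 0" unfolding d_def using \<open>\<exists>j. _\<close> by (rule LeastI_ex)
  have low: "hcomp G a j = 0" if "j < d" for j
  proof -
    have "\<not> (hcomp G a j \<noteq> 0)" using that unfolding d_def by (rule not_less_Least)
    then show ?thesis by simp
  qed
  have "hcomp G (s * a) d = hcomp G s 0 * hcomp G a d" by (rule hc_mult_low[OF g low]) assumption
  then have z: "hcomp G s 0 * hcomp G a d = 0" using sa hc_zero[OF dd] by simp
  have s0: "hcomp G s 0 \<in> G 0" "hcomp G s 0 \<noteq> 0" using hc_props[OF dd, of s] s by (auto simp: hom_max_ideal_def)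
  obtain y where y: "hcomp G s 0 * y = 1" using deg0_inv[OF f s0] by blast
  have "hcomp G a d = (hcomp G s 0 * y) * hcomp G a d" using y by simp
  also have "\<dots> = y * (hcomp G s 0 * hcomp G a d)" by (simp add: mult_ac)
  finally show False using z ad by simp
qed

lemma prod_in_S: assumes "locm sc S" shows "finite F \<Longrightarrow> (\<And>x. x \<in> F \<Longrightarrow> f x \<in> S) \<Longrightarrow> prod f F \<in> S"
proof (induction F rule: finite_induct)
  case empty then show ?case by (simp add: locm.oneS[OF assms])
next
  case (insert x F) then show ?case by (simp add: locm.multS[OF assms])
qed


theorem lemma2p3:
  fixes G :: "nat \<Rightarrow> 'r::comm_ring_1 set"
    and scM :: "'r \<Rightarrow> 'm::ab_group_add \<Rightarrow> 'm" and GM :: "int \<Rightarrow> 'm set"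
    and scN :: "'r \<Rightarrow> 'n::ab_group_add \<Rightarrow> 'n" and GN :: "int \<Rightarrow> 'n set"
    and \<phi> :: "('m \<times> 'r) set \<Rightarrow> ('n \<times> 'r) set"
  assumes "graded_ring G" and "degree0_field G"
    and "graded_module G scM GM" and "fin_gen_module scM"
    and "graded_module G scN GN" and "fin_gen_module scN"
    and "torsion_free scN"
    and "loc_module_hom (- hom_max_ideal G) scM scN \<phi>"
  shows "\<exists>\<psi> u. module_hom scM scN \<psi> \<and> loc_unit (- hom_max_ideal G) u \<and>
           (\<forall>X\<in>Loc (- hom_max_ideal G) scM.
              loc_map (- hom_max_ideal G) scN \<psi> X = loc_smult (- hom_max_ideal G) scN u (\<phi> X))"
proof -
  define S where "S = - hom_max_ideal G"
  note g = assms(1) and fd = assms(2)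
  have S1: "1 \<in> S" unfolding S_def by (rule S_one[OF g fd])
  have SM: "a * b \<in> S" if "a \<in> S" "b \<in> S" for a b
    using S_mult[OF g fd] that unfolding S_def by blast
  have SZ: "a = 0" if "s \<in> S" "s * a = 0" for s a
    using S_nzd[OF g fd] that unfolding S_def by blast
  have modM: "module scM" using assms(3) unfolding graded_module_def by blast
  have modN: "module scN" using assms(5) unfolding graded_module_def by blast
  have LM: "locm scM S" unfolding locm_def locm_axioms_def using modM S1 SM by blast
  have LN: "locm scN S" unfolding locm_def locm_axioms_def using modN S1 SM by blast
  have LR: "locm (*) S" by (rule locm_mult[OF LM])
  interpret M: locm scM S by (rule LM)
  interpret N: locm scN S by (rule LN)
  have tf: "n = 0" if "s \<in> S" "scN s n = 0" for s n
  proof -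
    have h: "\<And>a. s * a = 0 \<Longrightarrow> a = 0" using SZ[OF that(1)] .
    have tfd: "\<forall>r x. (\<forall>a::'r. r * a = 0 \<longrightarrow> a = 0) \<longrightarrow> scN r x = 0 \<longrightarrow> x = 0"
      using assms(7) unfolding torsion_free_def .
    show ?thesis by (rule tfd[rule_format, OF h that(2)])
  qed
  have inj: "n = n'" if "frac S scN n 1 = frac S scN n' 1" for n n'
  proof -
    have "\<exists>w\<in>S. scN w (scN 1 n - scN 1 n') = 0"
      by (rule iffD1[OF N.frac_eq_iff[OF S1 S1] that])
    then obtain w where "w \<in> S" "scN w (scN 1 n - scN 1 n') = 0" by blast
    then have "n - n' = 0" using tf[of w "n - n'"] by simp
    then show ?thesis by simp
  qed
  have hom: "loc_module_hom S scM scN \<phi>" using assms(8) unfolding S_def .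
  note h3 = hom[unfolded loc_module_hom_def]
  have homL: "\<phi> X \<in> Loc S scN" if "X \<in> Loc S scM" for X
    by (rule bspec[OF conjunct1[OF h3] that])
  have homA: "\<phi> (loc_add S scM X Y) = loc_add S scN (\<phi> X) (\<phi> Y)" if "X \<in> Loc S scM" "Y \<in> Loc S scM" for X Y
    by (rule bspec[OF bspec[OF conjunct1[OF conjunct2[OF h3]] that(1)] that(2)])
  have homS: "\<phi> (loc_smult S scM A X) = loc_smult S scN A (\<phi> X)" if "A \<in> Loc S (*)" "X \<in> Loc S scM" for A X
    by (rule bspec[OF bspec[OF conjunct2[OF conjunct2[OF h3]] that(1)] that(2)])
  have fR: "frac S (*) r t \<in> Loc S (*)" if "t \<in> S" for r t by (rule locm.frac_in_Loc[OF LR that])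
  have fM: "frac S scM x t \<in> Loc S scM" if "t \<in> S" for x t by (rule M.frac_in_Loc[OF that])
  have fN: "frac S scN x t \<in> Loc S scN" if "t \<in> S" for x t by (rule N.frac_in_Loc[OF that])
  obtain F where F: "finite F" "M.span F = UNIV" using assms(4) unfolding fin_gen_module_def by blast
  have "\<forall>x\<in>F. \<exists>p. snd p \<in> S \<and> \<phi> (frac S scM x 1) = frac S scN (fst p) (snd p)"
  proof
    fix x assume "x \<in> F"
    obtain n t where "t \<in> S" "\<phi> (frac S scM x 1) = frac S scN n t"
      using homL[OF fM[OF S1]] by (rule N.Loc_E)
    then show "\<exists>p. snd p \<in> S \<and> \<phi> (frac S scM x 1) = frac S scN (fst p) (snd p)"
      by (intro exI[of _ "(n, t)"]) simp
  qed
  then obtain pp where pp: "\<And>x. x \<in> F \<Longrightarrow> snd (pp x) \<in> S \<and> \<phi> (frac S scM x 1) = frac S scN (fst (pp x)) (snd (pp x))"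
    by metis
  define nn where "nn x = fst (pp x)" for x
  define ss where "ss x = snd (pp x)" for x
  have ssS: "ss x \<in> S" and phix: "\<phi> (frac S scM x 1) = frac S scN (nn x) (ss x)" if "x \<in> F" for x
    using pp[OF that] unfolding nn_def ss_def by auto
  define s0 where "s0 = prod ss F"
  define q where "q x = prod ss (F - {x})" for x
  have s0S: "s0 \<in> S" unfolding s0_def by (rule prod_in_S[OF LM F(1)]) (metis ssS)
  have qS: "q x \<in> S" for x unfolding q_def by (rule prod_in_S[OF LM]) (use F(1) ssS in auto)
  have s0q: "s0 = ss x * q x" if "x \<in> F" for x
    unfolding s0_def q_def using prod.remove[OF F(1) that] .
  define u where "u = frac S (*) s0 1"
  have uR: "u \<in> Loc S (*)" unfolding u_def by (rule fR[OF S1])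
  have uN: "loc_smult S scN u (frac S scN n t) = frac S scN (scN s0 n) t" if "t \<in> S" for n t
    unfolding u_def using loc_smult_frac[OF LN S1 that] by simp
  have phi0: "\<phi> (frac S scM 0 1) = frac S scN 0 1"
  proof -
    have e0: "frac S scM 0 1 = loc_smult S scM (frac S (*) 0 1) (frac S scM 0 1)"
      using loc_smult_frac[OF LM S1 S1] by simp
    have e: "\<phi> (frac S scM 0 1) = loc_smult S scN (frac S (*) 0 1) (\<phi> (frac S scM 0 1))"
      by (rule trans[OF arg_cong[where f=\<phi>, OF e0] homS[OF fR[OF S1] fM[OF S1]]])
    obtain n t where t: "t \<in> S" "\<phi> (frac S scM 0 1) = frac S scN n t"
      using homL[OF fM[OF S1]] by (rule N.Loc_E)
    have "frac S scN 0 t = frac S scN 0 1"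
      by (rule N.frac_eqI[OF t(1) S1 S1]) simp
    then show ?thesis using e t loc_smult_frac[OF LN S1 t(1)] by simp
  qed
  have key: "\<exists>n. frac S scN n 1 = loc_smult S scN u (\<phi> (frac S scM m 1))" for m
  proof -
    have "m \<in> M.span F" using F(2) by simp
    then show ?thesis
    proof (induction rule: M.span_induct_alt)
      case base
      show ?case using phi0 uN[OF S1] by (intro exI[of _ 0]) simp
    next
      case (step c x y)
      then obtain n' where n': "frac S scN n' 1 = loc_smult S scN u (\<phi> (frac S scM y 1))" by blast
      have e1: "frac S scM (scM c x + y) 1 = loc_add S scM (loc_smult S scM (frac S (*) c 1) (frac S scM x 1)) (frac S scM y 1)"
        using loc_smult_frac[OF LM S1 S1] M.loc_add_frac[OF S1 S1] by simp
      have P: "loc_smult S scN (frac S (*) c 1) (\<phi> (frac S scM x 1)) \<in> Loc S scN"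
        by (rule loc_smult_in[OF LN fR[OF S1] homL[OF fM[OF S1]]])
      have "\<phi> (frac S scM (scM c x + y) 1) = loc_add S scN (loc_smult S scN (frac S (*) c 1) (\<phi> (frac S scM x 1))) (\<phi> (frac S scM y 1))"
        unfolding e1 by (simp add: homA homS fR fM S1 loc_smult_in[OF LM])
      then have "loc_smult S scN u (\<phi> (frac S scM (scM c x + y) 1)) =
          loc_add S scN (loc_smult S scN u (loc_smult S scN (frac S (*) c 1) (\<phi> (frac S scM x 1))))
                        (loc_smult S scN u (\<phi> (frac S scM y 1)))"
        using loc_smult_add[OF LN uR P homL[OF fM[OF S1]]] by simp
      also have "loc_smult S scN u (loc_smult S scN (frac S (*) c 1) (\<phi> (frac S scM x 1)))
          = loc_smult S scN (frac S (*) c 1) (loc_smult S scN u (\<phi> (frac S scM x 1)))"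
        by (rule loc_smult_comm[OF LN uR fR[OF S1] homL[OF fM[OF S1]]])
      also have "loc_smult S scN u (\<phi> (frac S scM x 1)) = frac S scN (scN (q x) (nn x)) 1"
      proof -
        have "frac S scN (scN s0 (nn x)) (ss x) = frac S scN (scN (q x) (nn x)) 1"
          by (rule N.frac_eqI[OF ssS[OF step(1)] S1 S1]) (simp add: s0q[OF step(1)] mult_ac)
        then show ?thesis using phix[OF step(1)] uN[OF ssS[OF step(1)]] by simp
      qed
      finally show ?case using n'[symmetric] loc_smult_frac[OF LN S1 S1] N.loc_add_frac[OF S1 S1]
        by (intro exI[of _ "scN c (scN (q x) (nn x)) + n'"]) simp
    qed
  qed
  define psi where "psi m = (SOME n. frac S scN n 1 = loc_smult S scN u (\<phi> (frac S scM m 1)))" for m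
  have psi: "frac S scN (psi m) 1 = loc_smult S scN u (\<phi> (frac S scM m 1))" for m
    unfolding psi_def by (rule someI_ex[OF key])
  have psi_hom: "module_hom scM scN psi"
    unfolding module_hom_def module_hom_axioms_def
  proof (intro conjI allI modM modN)
    fix a b
    have "frac S scN (psi (a + b)) 1 = frac S scN (psi a + psi b) 1"
    proof -
      have "frac S scM (a + b) 1 = loc_add S scM (frac S scM a 1) (frac S scM b 1)"
        using M.loc_add_frac[OF S1 S1] by simp
      then have "frac S scN (psi (a + b)) 1 = loc_smult S scN u (loc_add S scN (\<phi> (frac S scM a 1)) (\<phi> (frac S scM b 1)))"
        using psi homA[OF fM[OF S1] fM[OF S1]] by simp
      also have "\<dots> = loc_add S scN (frac S scN (psi a) 1) (frac S scN (psi b) 1)"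
        using loc_smult_add[OF LN uR homL[OF fM[OF S1]] homL[OF fM[OF S1]]] psi by simp
      also have "\<dots> = frac S scN (psi a + psi b) 1" using N.loc_add_frac[OF S1 S1] by simp
      finally show ?thesis .
    qed
    then show "psi (a + b) = psi a + psi b" by (rule inj)
  next
    fix r a
    have "frac S scN (psi (scM r a)) 1 = frac S scN (scN r (psi a)) 1"
    proof -
      have "frac S scM (scM r a) 1 = loc_smult S scM (frac S (*) r 1) (frac S scM a 1)"
        using loc_smult_frac[OF LM S1 S1] by simp
      then have "frac S scN (psi (scM r a)) 1 = loc_smult S scN u (loc_smult S scN (frac S (*) r 1) (\<phi> (frac S scM a 1)))"
        using psi homS[OF fR[OF S1] fM[OF S1]] by simp
      also have "\<dots> = loc_smult S scN (frac S (*) r 1) (frac S scN (psi a) 1)"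
        using loc_smult_comm[OF LN uR fR[OF S1] homL[OF fM[OF S1]]] psi by simp
      also have "\<dots> = frac S scN (scN r (psi a)) 1" using loc_smult_frac[OF LN S1 S1] by simp
      finally show ?thesis .
    qed
    then show "psi (scM r a) = scN r (psi a)" by (rule inj)
  qed
  have unit: "loc_unit S u"
    unfolding loc_unit_def
  proof (intro conjI bexI)
    show "u \<in> Loc S (*)" by (rule uR)
    show "frac S (*) 1 s0 \<in> Loc S (*)" by (rule fR[OF s0S])
    have "frac S (*) (s0 * 1) (1 * s0) = frac S (*) 1 1"
      by (rule locm.frac_eqI[OF LR _ S1 S1]) (use s0S in simp_all)
    then show "loc_smult S (*) u (frac S (*) 1 s0) = frac S (*) 1 1"
      unfolding u_def using loc_smult_frac[OF LR S1 s0S] by simp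
  qed
  have final: "loc_map S scN psi X = loc_smult S scN u (\<phi> X)" if X: "X \<in> Loc S scM" for X
  proof -
    obtain m t where t: "t \<in> S" "X = frac S scM m t" using X by (rule M.Loc_E)
    have "X = loc_smult S scM (frac S (*) 1 t) (frac S scM m 1)"
      using t loc_smult_frac[OF LM t(1) S1] by simp
    then have "loc_smult S scN u (\<phi> X) = loc_smult S scN u (loc_smult S scN (frac S (*) 1 t) (\<phi> (frac S scM m 1)))"
      using homS[OF fR[OF t(1)] fM[OF S1]] by simp
    also have "\<dots> = loc_smult S scN (frac S (*) 1 t) (frac S scN (psi m) 1)"
      using loc_smult_comm[OF LN uR fR[OF t(1)] homL[OF fM[OF S1]]] psi by simp
    also have "\<dots> = frac S scN (psi m) t" using loc_smult_frac[OF LN t(1) S1] by simp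
    finally show ?thesis using t loc_map_frac[OF LM LN psi_hom t(1)] by simp
  qed
  show ?thesis unfolding S_def[symmetric] using psi_hom unit final by blast
qed
end
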